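(* Let $K$ be an algebraically closed field of characteristic $p>0$, $p\neq 2$, and $n\geq 4$. Let $\Phi$ be a group automorphism of $\mathrm{Aut}_0 K[x_1,\ldots,x_n]$ which fixes every element of $\mathrm{GL}_n(K)$ and fixes the automorphism $\psi: x_1\mapsto x_1+x_2x_3$, $x_k\mapsto x_k$ ($k\neq 1$). Let $M\in K[x_3,\ldots,x_n]$ be a monomial (a scalar multiple of a product of powers of $x_3,\ldots,x_n$) of positive total degree, and let $\varphi$ be the automorphism $x_1\mapsto x_1+M(x_3,\ldots,x_n)$, $x_k\mapsto x_k$ for $k=2,\ldots,n$. Then $\Phi(\varphi)=\varphi$.
   Context: $\mathrm{Aut}_0 K[x_1,\ldots,x_n]$ is the group under composition of $K$-algebra automorphisms of $K[x_1,\ldots,x_n]$ preserving the origin (each $\varphi(x_i)$ has zero constant term); $\mathrm{GL}_n(K)$ is its subgroup of linear automorphisms $x_i\mapsto\sum_j a_{ij}x_j$ with invertible matrix $(a_{ij})$. *)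

theory Defs
  imports "HOL-Library.Poly_Mapping" "HOL-Computational_Algebra.Polynomial"
begin

text \<open>Multivariate polynomials over 'a in variables indexed by nat.
  The paper's variable x_k (k = 1..n) is variable index k-1 here.\<close>
type_synonym 'a mpoly = "(nat \<Rightarrow>\<^sub>0 nat) \<Rightarrow>\<^sub>0 'a"

definition Var :: "nat \<Rightarrow> 'a::comm_ring_1 mpoly" where
  "Var i = Poly_Mapping.single (Poly_Mapping.single i 1) 1"

definition Const :: "'a::comm_ring_1 \<Rightarrow> 'a mpoly" where
  "Const c = Poly_Mapping.single 0 c"

definition polys :: "nat \<Rightarrow> 'a::comm_ring_1 mpoly set" where
  "polys n = {p. \<forall>m \<in> Poly_Mapping.keys p. Poly_Mapping.keys m \<subseteq> {..<n}}"

definition subst :: "(nat \<Rightarrow> 'a::comm_ring_1 mpoly) \<Rightarrow> 'a mpoly \<Rightarrow> 'a mpoly" where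
  "subst s p = (\<Sum>m \<in> Poly_Mapping.keys p.
      Const (Poly_Mapping.lookup p m) *
      (\<Prod>i \<in> Poly_Mapping.keys m. s i ^ Poly_Mapping.lookup m i))"

text \<open>An endomorphism of K[x_1..x_n] is represented by the tuple of images of
  the variables; variables outside the range are normalised to themselves.\<close>
definition endos :: "nat \<Rightarrow> (nat \<Rightarrow> 'a::comm_ring_1 mpoly) set" where
  "endos n = {s. (\<forall>i<n. s i \<in> polys n) \<and> (\<forall>i\<ge>n. s i = Var i)}"

text \<open>Composition of endomorphisms (as maps): (comp s t) = s \<circ> t,
  i.e. x_i \<mapsto> s(t(x_i)).\<close>
definition comp :: "(nat \<Rightarrow> 'a::comm_ring_1 mpoly) \<Rightarrow> (nat \<Rightarrow> 'a mpoly) \<Rightarrow> (nat \<Rightarrow> 'a mpoly)" where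
  "comp s t = (\<lambda>i. subst s (t i))"

definition idm :: "nat \<Rightarrow> 'a::comm_ring_1 mpoly" where
  "idm = Var"

definition autos :: "nat \<Rightarrow> (nat \<Rightarrow> 'a::comm_ring_1 mpoly) set" where
  "autos n = {s \<in> endos n. \<exists>t \<in> endos n. comp s t = idm \<and> comp t s = idm}"

definition Aut0 :: "nat \<Rightarrow> (nat \<Rightarrow> 'a::comm_ring_1 mpoly) set" where
  "Aut0 n = {s \<in> autos n. \<forall>i<n. Poly_Mapping.lookup (s i) 0 = 0}"

definition GLn :: "nat \<Rightarrow> (nat \<Rightarrow> 'a::comm_ring_1 mpoly) set" where
  "GLn n = {s \<in> Aut0 n. \<forall>i<n. \<exists>a::nat \<Rightarrow> 'a. s i = (\<Sum>j<n. Const (a j) * Var j)}"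

definition group_automorphism_Aut0 ::
  "nat \<Rightarrow> ((nat \<Rightarrow> 'a::comm_ring_1 mpoly) \<Rightarrow> (nat \<Rightarrow> 'a mpoly)) \<Rightarrow> bool" where
  "group_automorphism_Aut0 n \<Phi> \<longleftrightarrow> bij_betw \<Phi> (Aut0 n) (Aut0 n) \<and>
     (\<forall>s \<in> Aut0 n. \<forall>t \<in> Aut0 n. \<Phi> (comp s t) = comp (\<Phi> s) (\<Phi> t))"

definition alg_closed :: "'a::field itself \<Rightarrow> bool" where
  "alg_closed _ \<longleftrightarrow> (\<forall>q :: 'a poly. Polynomial.degree q > 0 \<longrightarrow> (\<exists>x. poly q x = 0))"

end

theory Submission imports Defs begin

lemma pm_expand: "(\<Sum>m\<in>Poly_Mapping.keys p. Poly_Mapping.single m (Poly_Mapping.lookup p m)) = (p :: 'b \<Rightarrow>\<^sub>0 'c::comm_monoid_add)"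
proof (rule poly_mapping_eqI)
  fix k
  show "Poly_Mapping.lookup (\<Sum>m\<in>Poly_Mapping.keys p. Poly_Mapping.single m (Poly_Mapping.lookup p m)) k = Poly_Mapping.lookup p k"
    by (simp add: lookup_sum lookup_single when_def in_keys_iff)
qed

definition mon :: "(nat \<Rightarrow> 'a::comm_ring_1 mpoly) \<Rightarrow> (nat \<Rightarrow>\<^sub>0 nat) \<Rightarrow> 'a mpoly" where
  "mon s m = (\<Prod>i \<in> Poly_Mapping.keys m. s i ^ Poly_Mapping.lookup m i)"

lemma mon_superset: "finite S \<Longrightarrow> Poly_Mapping.keys m \<subseteq> S \<Longrightarrow> mon s m = (\<Prod>i\<in>S. s i ^ Poly_Mapping.lookup m i)"
  unfolding mon_def
  by (rule prod.mono_neutral_left) (auto simp: in_keys_iff)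

lemma keys_add_nat: "Poly_Mapping.keys (a + b) = Poly_Mapping.keys a \<union> Poly_Mapping.keys (b :: nat \<Rightarrow>\<^sub>0 nat)"
  by (auto simp: in_keys_iff lookup_add)

lemma mon_add: "mon s (a + b) = mon s a * mon s b"
proof -
  let ?S = "Poly_Mapping.keys a \<union> Poly_Mapping.keys b"
  have "mon s (a+b) = (\<Prod>i\<in>?S. s i ^ Poly_Mapping.lookup (a+b) i)"
    by (rule mon_superset) (auto simp: keys_add_nat)
  also have "\<dots> = (\<Prod>i\<in>?S. s i ^ Poly_Mapping.lookup a i) * (\<Prod>i\<in>?S. s i ^ Poly_Mapping.lookup b i)"
    by (simp add: lookup_add power_add prod.distrib)
  also have "\<dots> = mon s a * mon s b"
    by (simp add: mon_superset[symmetric])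
  finally show ?thesis .
qed

lemma mon_zero[simp]: "mon s 0 = 1"
  by (simp add: mon_def)

lemma subst_mon: "subst s p = (\<Sum>m \<in> Poly_Mapping.keys p. Const (Poly_Mapping.lookup p m) * mon s m)"
  by (simp add: subst_def mon_def)

lemma Const_0[simp]: "Const 0 = 0" by (simp add: Const_def)
lemma Const_1[simp]: "Const 1 = 1" by (simp add: Const_def)
lemma Const_add: "Const (a + b) = Const a + Const b" by (simp add: Const_def single_add)
lemma Const_mult: "Const (a * b) = Const a * Const b" by (simp add: Const_def mult_single)
lemma Const_uminus: "Const (- a) = - Const a" by (simp add: Const_def single_uminus)

lemma subst_superset: "finite S \<Longrightarrow> Poly_Mapping.keys p \<subseteq> S \<Longrightarrow>
   subst s p = (\<Sum>m\<in>S. Const (Poly_Mapping.lookup p m) * mon s m)"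
  unfolding subst_mon
  by (rule sum.mono_neutral_left) (auto simp: in_keys_iff)

lemma subst_add: "subst s (p + q) = subst s p + subst s q"
proof -
  let ?S = "Poly_Mapping.keys p \<union> Poly_Mapping.keys q"
  have f: "finite ?S" by simp
  have "subst s (p+q) = (\<Sum>m\<in>?S. Const (Poly_Mapping.lookup (p+q) m) * mon s m)"
    by (rule subst_superset[OF f]) (rule keys_add)
  also have "\<dots> = (\<Sum>m\<in>?S. Const (Poly_Mapping.lookup p m) * mon s m) + (\<Sum>m\<in>?S. Const (Poly_Mapping.lookup q m) * mon s m)"
    by (simp add: lookup_add Const_add distrib_right sum.distrib)
  also have "\<dots> = subst s p + subst s q"
    by (simp add: subst_superset[OF f])
  finally show ?thesis .
qed

lemma subst_zero[simp]: "subst s 0 = 0"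
  by (simp add: subst_def)

lemma subst_sum: "subst s (sum f A) = (\<Sum>x\<in>A. subst s (f x))"
  by (induction A rule: infinite_finite_induct) (auto simp: subst_add)

lemma subst_single: "subst s (Poly_Mapping.single m c) = Const c * mon s m"
  by (simp add: subst_mon)

lemma subst_mult: "subst s (p * q) = subst s p * subst s q"
proof -
  have "p * q = (\<Sum>a\<in>Poly_Mapping.keys p. \<Sum>b\<in>Poly_Mapping.keys q.
      Poly_Mapping.single a (Poly_Mapping.lookup p a) * Poly_Mapping.single b (Poly_Mapping.lookup q b))"
    by (subst (1) pm_expand[of p, symmetric], subst (1) pm_expand[of q, symmetric])
       (simp add: sum_distrib_left sum_distrib_right, rule sum.swap)
  then have "subst s (p * q) = (\<Sum>a\<in>Poly_Mapping.keys p. \<Sum>b\<in>Poly_Mapping.keys q.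
      (Const (Poly_Mapping.lookup p a) * mon s a) * (Const (Poly_Mapping.lookup q b) * mon s b))"
    by (simp add: subst_sum mult_single subst_single Const_mult mon_add mult_ac)
  also have "\<dots> = subst s p * subst s q"
    by (simp add: subst_mon sum_distrib_left sum_distrib_right, rule sum.swap)
  finally show ?thesis .
qed

lemma subst_Const[simp]: "subst s (Const c) = Const c"
  by (simp add: Const_def subst_single)

lemma subst_one[simp]: "subst s 1 = 1"
  using subst_Const[of s 1] by simp

lemma subst_uminus: "subst s (- p) = - subst s p"
  using subst_add[of s p "-p"] by (metis neg_eq_iff_add_eq_0 add.commute subst_zero add.right_inverse)

lemma subst_diff: "subst s (p - q) = subst s p - subst s q"
  using subst_add[of s p "-q"] by (simp add: subst_uminus)

lemma subst_power: "subst s (p ^ k) = subst s p ^ k"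
  by (induction k) (simp_all add: subst_mult)

lemma subst_prod: "subst s (prod f A) = (\<Prod>x\<in>A. subst s (f x))"
  by (induction A rule: infinite_finite_induct) (auto simp: subst_mult)

lemma subst_Var[simp]: "subst s (Var i) = s i"
  by (simp add: Var_def subst_single mon_def)

lemma subst_mon_hom: "subst s (mon t m) = mon (comp s t) m"
  by (simp add: mon_def subst_prod subst_power comp_def)

lemma subst_subst: "subst s (subst t p) = subst (comp s t) p"
  unfolding subst_mon[of t p] subst_mon[of "comp s t" p]
  by (simp add: subst_sum subst_mult subst_mon_hom)

lemma comp_assoc: "comp (comp s t) u = comp s (comp t u)"
  by (simp add: comp_def subst_subst)

lemma comp_idm[simp]: "comp s idm = s"
  by (simp add: comp_def idm_def)

lemma comp_cancel: "comp x g = comp y g \<Longrightarrow> comp g h = idm \<Longrightarrow> x = y"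
  by (metis comp_assoc comp_idm)


lemma Var_power: "Var i ^ k = Poly_Mapping.single (Poly_Mapping.single i k) (1::'a::comm_ring_1)"
  by (induction k) (simp_all add: Var_def mult_single single_add[symmetric] add.commute)

lemma prod_singles: "(\<Prod>i\<in>S. Poly_Mapping.single (Poly_Mapping.single i (f i)) (1::'a::comm_ring_1))
   = Poly_Mapping.single (\<Sum>i\<in>S. Poly_Mapping.single i (f i)) 1"
  by (induction S rule: infinite_finite_induct) (simp_all add: mult_single)

lemma mon_Var: "mon Var m = (Poly_Mapping.single m 1 :: 'a::comm_ring_1 mpoly)"
  by (simp add: mon_def Var_power prod_singles pm_expand)

lemma Const_mult_single: "Const c * Poly_Mapping.single m 1 = Poly_Mapping.single m c"
  by (simp add: Const_def mult_single)

lemma subst_Var_id: "subst Var p = p"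
  by (simp add: subst_mon mon_Var Const_mult_single pm_expand)

lemma subst_id_on: "(\<And>m i. m \<in> Poly_Mapping.keys p \<Longrightarrow> i \<in> Poly_Mapping.keys m \<Longrightarrow> s i = Var i) \<Longrightarrow> subst s p = p"
proof -
  assume h: "\<And>m i. m \<in> Poly_Mapping.keys p \<Longrightarrow> i \<in> Poly_Mapping.keys m \<Longrightarrow> s i = Var i"
  have "subst s p = (\<Sum>m \<in> Poly_Mapping.keys p. Const (Poly_Mapping.lookup p m) * mon Var m)"
    unfolding subst_mon by (rule sum.cong) (auto simp: mon_def h intro!: prod.cong)
  also have "\<dots> = subst Var p" by (simp add: subst_mon)
  finally show ?thesis by (simp add: subst_Var_id)
qed

definition good :: "nat \<Rightarrow> nat \<Rightarrow> 'a::comm_ring_1 mpoly \<Rightarrow> bool" where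
  "good n i f \<longleftrightarrow> (\<forall>m\<in>Poly_Mapping.keys f. Poly_Mapping.keys m \<subseteq> {..<n} - {i} \<and> m \<noteq> 0)"

abbreviation E :: "nat \<Rightarrow> 'a::comm_ring_1 mpoly \<Rightarrow> nat \<Rightarrow> 'a mpoly" where
  "E i f \<equiv> idm(i := Var i + f)"

lemma good_add: "good n i f \<Longrightarrow> good n i g \<Longrightarrow> good n i (f + g)"
  using keys_add[of f g] unfolding good_def by blast

lemma good_uminus: "good n i f \<Longrightarrow> good n i (- f)"
  unfolding good_def by simp

lemma good_single: "Poly_Mapping.keys e \<subseteq> {..<n} - {i} \<Longrightarrow> e \<noteq> 0 \<Longrightarrow> good n i (Poly_Mapping.single e c)"
  unfolding good_def by simp

lemma keys_Var: "Poly_Mapping.keys (Var j :: 'a::comm_ring_1 mpoly) = {Poly_Mapping.single j 1}"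
  by (simp add: Var_def)

lemma single_Suc0_nz[simp]: "Poly_Mapping.single j (Suc 0) \<noteq> 0"
  by (metis lookup_single_eq lookup_zero nat.simps(3))

lemma good_mult: "good n i f \<Longrightarrow> (\<And>m. m \<in> Poly_Mapping.keys g \<Longrightarrow> Poly_Mapping.keys m \<subseteq> {..<n} - {i})
   \<Longrightarrow> good n i (f * g)"
  unfolding good_def
proof
  fix m assume a: "\<forall>m\<in>Poly_Mapping.keys f. Poly_Mapping.keys m \<subseteq> {..<n} - {i} \<and> m \<noteq> 0"
    and b: "\<And>m. m \<in> Poly_Mapping.keys g \<Longrightarrow> Poly_Mapping.keys m \<subseteq> {..<n} - {i}"
    and m: "m \<in> Poly_Mapping.keys (f * g)"
  then obtain x y where xy: "m = x + y" "x \<in> Poly_Mapping.keys f" "y \<in> Poly_Mapping.keys g"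
    using keys_mult[of f g] by blast
  have "x \<noteq> 0" using a xy by blast
  then have "m \<noteq> 0" using xy(1)
    by (metis (mono_tags) add_is_0 lookup_add lookup_zero poly_mapping_eqI)
  then show "Poly_Mapping.keys m \<subseteq> {..<n} - {i} \<and> m \<noteq> 0"
    using a b xy keys_add_nat[of x y] by blast
qed

lemma good_Var_mult: "good n i f \<Longrightarrow> j < n \<Longrightarrow> j \<noteq> i \<Longrightarrow> good n i (f * Var j)"
  by (rule good_mult) (auto simp: keys_Var)

lemma good_Var: "j < n \<Longrightarrow> j \<noteq> i \<Longrightarrow> good n i (Var j)"
  by (simp add: good_def keys_Var)

lemma subst_upd_good: "good n i h \<Longrightarrow> subst (Var(i := p)) h = h"
  by (rule subst_id_on) (auto simp: good_def)

lemma subst_E_good: "good n i h \<Longrightarrow> subst (E i f) h = h"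
  by (simp add: idm_def subst_upd_good)

lemma comp_E: "good n i h \<Longrightarrow> comp (E i f) (E i h) = E i (f + h)"
  by (rule ext) (simp add: comp_def idm_def subst_add subst_upd_good add_ac)

lemma E_zero: "E i 0 = idm"
  by (rule ext) (simp add: idm_def)

lemma idm_upd[simp]: "idm(i := Var i) = idm"
  by (rule ext) (simp add: idm_def)

lemma Var_polys: "j < n \<Longrightarrow> Var j \<in> polys n"
  by (simp add: polys_def keys_Var)

lemma polys_add: "p \<in> polys n \<Longrightarrow> q \<in> polys n \<Longrightarrow> p + q \<in> polys n"
  using keys_add[of p q] unfolding polys_def by blast

lemma good_polys: "good n i f \<Longrightarrow> f \<in> polys n"
  unfolding good_def polys_def by blast

lemma lookup_Var_0: "Poly_Mapping.lookup (Var j :: 'a::comm_ring_1 mpoly) 0 = 0"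
  by (simp add: Var_def lookup_single_not_eq)

lemma good_lookup_0: "good n i f \<Longrightarrow> Poly_Mapping.lookup f 0 = 0"
  unfolding good_def by (metis in_keys_iff)

lemma E_endos: "i < n \<Longrightarrow> good n i f \<Longrightarrow> E i f \<in> endos n"
  unfolding endos_def
  by (auto simp: idm_def Var_polys polys_add good_polys)

lemma E_Aut0: "i < n \<Longrightarrow> good n i f \<Longrightarrow> E i f \<in> Aut0 n"
proof -
  assume i: "i < n" and g: "good n i f"
  have "E i f \<in> autos n"
    unfolding autos_def
  proof (intro CollectI conjI bexI)
    show "E i f \<in> endos n" using E_endos[OF i g] .
    show "E i (- f) \<in> endos n" using E_endos[OF i good_uminus[OF g]] .
    show "comp (E i f) (E i (- f)) = idm"
      using comp_E[OF good_uminus[OF g], where f=f] by (simp add: E_zero)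
    show "comp (E i (- f)) (E i f) = idm"
      using comp_E[OF g, where f="-f"] by (simp add: E_zero)
  qed
  moreover have "\<forall>j<n. Poly_Mapping.lookup (E i f j) 0 = 0"
    by (auto simp: idm_def lookup_add lookup_Var_0 good_lookup_0[OF g])
  ultimately show ?thesis by (simp add: Aut0_def)
qed

lemma commutator: "i \<noteq> k \<Longrightarrow> j \<noteq> i \<Longrightarrow> j \<noteq> k \<Longrightarrow> good n i g \<Longrightarrow> good n k g \<Longrightarrow>
  comp (E k g) (E i (Var k * Var j)) = comp (E i (g * Var j + Var k * Var j)) (E k g)"
proof (rule ext)
  fix m assume a: "i \<noteq> k" "j \<noteq> i" "j \<noteq> k" "good n i g" "good n k g"
  show "comp (E k g) (E i (Var k * Var j)) m = comp (E i (g * Var j + Var k * Var j)) (E k g) m"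
  proof (cases "m = i")
    case True
    then show ?thesis using a by (simp add: comp_def idm_def subst_add subst_mult distrib_right)
  next
    case False
    then show ?thesis using a
      by (cases "m = k") (simp_all add: comp_def idm_def subst_add subst_upd_good)
  qed
qed

lemma fix_lemma:
  assumes G: "group_automorphism_Aut0 n \<Phi>"
    and mem: "a \<in> Aut0 n" "b \<in> Aut0 n" "c \<in> Aut0 n" "d \<in> Aut0 n"
    and fa: "\<Phi> a = a" and fb: "\<Phi> b = b"
    and e1: "comp b a = comp d b" and e2: "comp c a = d"
  shows "\<Phi> c = c"
proof -
  have hom: "\<And>s t. s \<in> Aut0 n \<Longrightarrow> t \<in> Aut0 n \<Longrightarrow> \<Phi> (comp s t) = comp (\<Phi> s) (\<Phi> t)"
    using G by (simp add: group_automorphism_Aut0_def)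
  have inv: "\<And>s. s \<in> Aut0 n \<Longrightarrow> \<exists>t. comp s t = idm"
    by (auto simp: Aut0_def autos_def)
  have "comp (\<Phi> d) b = comp d b"
    using hom[OF mem(4) mem(2)] hom[OF mem(2) mem(1)] fa fb e1 by simp
  then have "\<Phi> d = d" using inv[OF mem(2)] comp_cancel by metis
  then have "comp (\<Phi> c) a = comp c a"
    using hom[OF mem(3) mem(1)] fa e2 by simp
  then show ?thesis using inv[OF mem(1)] comp_cancel by metis
qed


lemma lin_delta: "j0 < n \<Longrightarrow> (\<Sum>j<n. Const (if j = j0 then c else 0) * Var j) = Const c * (Var j0 :: 'a::comm_ring_1 mpoly)"
proof -
  assume j0: "j0 < n"
  have "(\<Sum>j<n. Const (if j = j0 then c else 0) * Var j) = (\<Sum>j<n. if j = j0 then Const c * (Var j :: 'a mpoly) else 0)"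
    by (rule sum.cong) auto
  also have "\<dots> = Const c * Var j0" using j0 by simp
  finally show ?thesis .
qed

lemma Var_lin: "j0 < n \<Longrightarrow> \<exists>a. (Var j0 :: 'a::comm_ring_1 mpoly) = (\<Sum>j<n. Const (a j) * Var j)"
proof -
  assume j0: "j0 < n"
  show ?thesis
    by (rule exI[of _ "\<lambda>j. if j = j0 then 1 else 0"]) (simp only: lin_delta[OF j0] Const_1 mult_1_left)
qed

lemma Var_single: "Var l = Poly_Mapping.single (Poly_Mapping.single l 1) 1"
  by (simp add: Var_def)

lemma Const_Var: "Const c * Var l = Poly_Mapping.single (Poly_Mapping.single l 1) c"
  by (simp add: Const_def Var_def mult_single)

lemma lin_E: "k < n \<Longrightarrow> l < n \<Longrightarrow> k \<noteq> l \<Longrightarrow>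
   E k (Poly_Mapping.single (Poly_Mapping.single l 1) c) \<in> GLn (n::nat)"
proof -
  assume a: "k < n" "l < n" "k \<noteq> l"
  let ?f = "Poly_Mapping.single (Poly_Mapping.single l 1) c :: 'a mpoly"
  have g: "good n k ?f" by (rule good_single) (use a in auto)
  have "\<exists>b. Var k + ?f = (\<Sum>j<n. Const (b j) * Var j)"
  proof -
    have "(\<Sum>j<n. Const ((if j = k then 1 else 0) + (if j = l then c else 0)) * Var j)
       = (\<Sum>j<n. Const (if j = k then 1 else 0) * Var j) + (\<Sum>j<n. Const (if j = l then c else 0) * (Var j :: 'a mpoly))"
      by (simp add: Const_add distrib_right sum.distrib)
    also have "\<dots> = Const 1 * Var k + Const c * Var l"
      by (simp only: lin_delta[OF a(1)] lin_delta[OF a(2)])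
    also have "\<dots> = Var k + ?f" by (simp add: Const_Var)
    finally show ?thesis
      by (intro exI[of _ "\<lambda>j. (if j = k then 1 else 0) + (if j = l then c else 0)"]) simp
  qed
  then have "\<forall>i<n. \<exists>b. E k ?f i = (\<Sum>j<n. Const (b j) * Var j)"
    by (auto simp: idm_def Var_lin)
  then show ?thesis using E_Aut0[OF a(1) g] by (simp add: GLn_def)
qed

abbreviation P01 :: "nat \<Rightarrow> 'a::comm_ring_1 mpoly" where
  "P01 \<equiv> idm(0 := Var 1, 1 := Var 0)"

lemma P01_inv: "comp P01 P01 = idm"
  by (rule ext) (simp add: comp_def idm_def)

lemma P01_GL: "2 \<le> n \<Longrightarrow> P01 \<in> GLn n"
proof -
  assume n: "2 \<le> n"
  have pv: "\<And>i. P01 i = Var (if i = 0 then 1 else if i = 1 then 0 else i)"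
    by (simp add: idm_def)
  have en: "P01 \<in> endos n"
    unfolding endos_def
  proof (intro CollectI conjI allI impI)
    fix i assume "i < n" then show "P01 i \<in> polys n"
      using n unfolding pv by (intro Var_polys) auto
  next
    fix i assume "n \<le> i" then show "P01 i = Var i"
      using n unfolding pv by auto
  qed
  have "P01 \<in> autos n"
    unfolding autos_def using en P01_inv by blast
  moreover have "\<forall>i<n. Poly_Mapping.lookup (P01 i) 0 = 0"
    by (simp add: idm_def lookup_Var_0)
  moreover have "\<forall>i<n. \<exists>a. P01 i = (\<Sum>j<n. Const (a j) * Var j)"
  proof (intro allI impI)
    fix i assume "i < n" then show "\<exists>a. P01 i = (\<Sum>j<n. Const (a j) * Var j)"
      using n unfolding pv by (intro Var_lin) auto
  qed
  ultimately show ?thesis by (simp add: GLn_def Aut0_def)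
qed

lemma swap_eq: "comp P01 (E 0 (Var 1 * Var 2)) = comp (E 1 (Var 0 * Var 2)) P01"
  by (rule ext) (simp add: comp_def idm_def subst_add subst_mult)

lemma step:
  assumes G: "group_automorphism_Aut0 n \<Phi>"
    and idx: "i < n" "k < n" "j < n" "i \<noteq> k" "j \<noteq> i" "j \<noteq> k"
    and gi: "good n i g" and gk: "good n k g"
    and fa: "\<Phi> (E i (Var k * Var j)) = E i (Var k * Var j)"
    and fb: "\<Phi> (E k g) = E k g"
  shows "\<Phi> (E i (g * Var j)) = E i (g * Var j)"
proof -
  have ga: "good n i (Var k * Var j)"
    using idx by (intro good_Var_mult good_Var) auto
  have gc: "good n i (g * Var j)"
    using idx gi by (intro good_Var_mult) auto
  show ?thesis
  proof (rule fix_lemma[OF G _ _ _ _ fa fb])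
    show "E i (Var k * Var j) \<in> Aut0 n" using E_Aut0[OF idx(1) ga] .
    show "E k g \<in> Aut0 n" using E_Aut0[OF idx(2) gk] .
    show "E i (g * Var j) \<in> Aut0 n" using E_Aut0[OF idx(1) gc] .
    show "E i (g * Var j + Var k * Var j) \<in> Aut0 n" using E_Aut0[OF idx(1) good_add[OF gc ga]] .
    show "comp (E k g) (E i (Var k * Var j)) = comp (E i (g * Var j + Var k * Var j)) (E k g)"
      using idx gi gk by (intro commutator) auto
    show "comp (E i (g * Var j)) (E i (Var k * Var j)) = E i (g * Var j + Var k * Var j)"
      using comp_E[OF ga] .
  qed
qed


lemma psi1_fix:
  assumes G: "group_automorphism_Aut0 n \<Phi>" and n: "4 \<le> n"
    and GL: "\<forall>g \<in> GLn n. \<Phi> g = g"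
    and psi: "\<Phi> (E 0 (Var 1 * Var 2)) = E 0 (Var 1 * Var 2)"
  shows "\<Phi> (E 1 (Var 0 * Var 2)) = E 1 (Var 0 * Var 2)"
proof -
  have hom: "\<And>s t. s \<in> Aut0 n \<Longrightarrow> t \<in> Aut0 n \<Longrightarrow> \<Phi> (comp s t) = comp (\<Phi> s) (\<Phi> t)"
    using G by (simp add: group_automorphism_Aut0_def)
  have P: "P01 \<in> GLn n" using n by (intro P01_GL) auto
  then have PA: "P01 \<in> Aut0 n" unfolding GLn_def by blast
  have fP: "\<Phi> P01 = P01" using GL P by blast
  have A0: "E 0 (Var 1 * Var 2) \<in> Aut0 n"
    using n by (intro E_Aut0 good_Var_mult good_Var) auto
  have A1: "E 1 (Var 0 * Var 2) \<in> Aut0 n"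
    using n by (intro E_Aut0 good_Var_mult good_Var) auto
  have "comp (\<Phi> (E 1 (Var 0 * Var 2))) P01 = comp (E 1 (Var 0 * Var 2)) P01"
    using hom[OF A1 PA] hom[OF PA A0] fP psi swap_eq by metis
  then show ?thesis using comp_cancel P01_inv by metis
qed

lemma a_fix:
  assumes G: "group_automorphism_Aut0 n \<Phi>" and n: "4 \<le> n"
    and GL: "\<forall>g \<in> GLn n. \<Phi> g = g"
    and psi: "\<Phi> (E 0 (Var 1 * Var 2)) = E 0 (Var 1 * Var 2)"
    and ik: "(i = 0 \<and> k = 1) \<or> (i = 1 \<and> k = 0)"
    and j: "2 \<le> j" "j < n"
  shows "\<Phi> (E i (Var k * Var j)) = E i (Var k * Var j)"
proof -
  have base: "\<Phi> (E i (Var k * Var 2)) = E i (Var k * Var 2)"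
    using ik
  proof
    assume h: "i = 0 \<and> k = 1"
    then have "i = 0" "k = 1" by auto
    then show ?thesis using psi by (simp only:)
  next
    assume h: "i = 1 \<and> k = 0"
    then have "i = 1" "k = 0" by auto
    then show ?thesis using psi1_fix[OF G n GL psi] by (simp only:)
  qed
  show ?thesis
  proof (cases "j = 2")
    case True then show ?thesis using base by simp
  next
    case False
    have fb: "\<Phi> (E 2 (Var j)) = E 2 (Var j)"
    proof -
      have "E 2 (Var j) \<in> GLn n"
        using lin_E[of 2 n j 1] n j False by (simp add: Var_single)
      then show ?thesis using GL by blast
    qed
    have ba: "\<Phi> (E i (Var 2 * Var k)) = E i (Var 2 * Var k)"
      using base by (simp only: mult.commute[of "Var k" "Var 2"])
    have idx: "i < n" "2 < n" "k < n" "i \<noteq> 2" "k \<noteq> i" "k \<noteq> 2" using ik n by auto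
    have "\<Phi> (E i (Var j * Var k)) = E i (Var j * Var k)"
      by (rule step[OF G idx _ _ ba fb]) (use j False idx ik in \<open>auto intro: good_Var\<close>)
    then show ?thesis by (simp add: mult.commute)
  qed
qed


lemma mono_fix:
  fixes \<Phi> :: "(nat \<Rightarrow> 'a::comm_ring_1 mpoly) \<Rightarrow> (nat \<Rightarrow> 'a mpoly)"
  assumes G: "group_automorphism_Aut0 n \<Phi>" and n: "4 \<le> n"
    and GL: "\<forall>g \<in> GLn n. \<Phi> g = g"
    and psi: "\<Phi> (E 0 (Var 1 * Var 2)) = E 0 (Var 1 * Var 2)"
  shows "\<forall>e c i (k::nat). ((i = 0 \<and> k = 1) \<or> (i = 1 \<and> k = 0)) \<longrightarrow> Poly_Mapping.keys e \<subseteq> {2..<n} \<longrightarrow>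
     e \<noteq> 0 \<longrightarrow> (\<Sum>x<n. Poly_Mapping.lookup e x) = N \<longrightarrow>
     \<Phi> (E i (Poly_Mapping.single e c)) = E i (Poly_Mapping.single e c)"
proof (induction N rule: less_induct)
  case (less N)
  show ?case
  proof (intro allI impI)
    fix e :: "nat \<Rightarrow>\<^sub>0 nat" and c :: 'a and i k :: nat
    assume ik: "(i = 0 \<and> k = 1) \<or> (i = 1 \<and> k = 0)" and ke: "Poly_Mapping.keys e \<subseteq> {2..<n}"
      and e0: "e \<noteq> 0" and N: "(\<Sum>x<n. Poly_Mapping.lookup e x) = N"
    obtain j where j: "j \<in> Poly_Mapping.keys e" using e0 by fastforce
    have jn: "2 \<le> j" "j < n" using j ke by auto
    define e' where "e' = e - Poly_Mapping.single j 1"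
    have ej: "1 \<le> Poly_Mapping.lookup e j" using j by (simp add: in_keys_iff)
    have ee: "e = e' + Poly_Mapping.single j 1"
      by (rule poly_mapping_eqI) (use ej in \<open>auto simp: e'_def lookup_add lookup_minus lookup_single when_def\<close>)
    have ke': "Poly_Mapping.keys e' \<subseteq> Poly_Mapping.keys e"
      by (auto simp: e'_def in_keys_iff lookup_minus)
    have idx: "i < n" "k < n" "i \<noteq> k" "j \<noteq> i" "j \<noteq> k" using ik n jn by auto
    show "\<Phi> (E i (Poly_Mapping.single e c)) = E i (Poly_Mapping.single e c)"
    proof (cases "e' = 0")
      case True
      then have "E i (Poly_Mapping.single e c) \<in> GLn n"
        using ee lin_E[of i n j c] idx jn by simp
      then show ?thesis using GL by blast
    next
      case False
      have sumN: "(\<Sum>x<n. Poly_Mapping.lookup e' x) < N"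
      proof -
        have "N = (\<Sum>x<n. Poly_Mapping.lookup e' x) + (\<Sum>x<n. Poly_Mapping.lookup (Poly_Mapping.single j (1::nat)) x)"
          unfolding N[symmetric] by (subst ee) (simp add: lookup_add sum.distrib)
        also have "(\<Sum>x<n. Poly_Mapping.lookup (Poly_Mapping.single j (1::nat)) x) = 1"
          using jn by (simp add: lookup_single when_def)
        finally show ?thesis by simp
      qed
      have ke'': "Poly_Mapping.keys e' \<subseteq> {2..<n}" using ke ke' by blast
      have ki: "(k = 0 \<and> i = 1) \<or> (k = 1 \<and> i = 0)" using ik by auto
      have fb: "\<Phi> (E k (Poly_Mapping.single e' c)) = E k (Poly_Mapping.single e' c)"
        using less.IH[OF sumN] ki ke'' False by blast
      have fa: "\<Phi> (E i (Var k * Var j)) = E i (Var k * Var j)"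
        using a_fix[OF G n GL psi ik jn] .
      have gi: "good n i (Poly_Mapping.single e' c)"
        by (rule good_single) (use ke'' ik False in auto)
      have gk: "good n k (Poly_Mapping.single e' c)"
        by (rule good_single) (use ke'' ik False in auto)
      have "\<Phi> (E i (Poly_Mapping.single e' c * Var j)) = E i (Poly_Mapping.single e' c * Var j)"
        by (rule step[OF G idx(1,2) jn(2) idx(3,4,5) gi gk fa fb])
      moreover have "Poly_Mapping.single e' c * Var j = Poly_Mapping.single e c"
        by (simp add: Var_def mult_single ee)
      ultimately show ?thesis by simp
    qed
  qed
qed

theorem mainTheorem5:
  fixes \<Phi> :: "(nat \<Rightarrow> 'a::field mpoly) \<Rightarrow> (nat \<Rightarrow> 'a mpoly)"
    and n :: nat and c :: 'a and e :: "nat \<Rightarrow>\<^sub>0 nat"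
  assumes "alg_closed TYPE('a)"
    and "CHAR('a) > 0" and "CHAR('a) \<noteq> 2"
    and "n \<ge> 4"
    and "group_automorphism_Aut0 n \<Phi>"
    and "\<forall>g \<in> GLn n. \<Phi> g = g"
    and "\<Phi> (idm(0 := Var 0 + Var 1 * Var 2)) = idm(0 := Var 0 + Var 1 * Var 2)"
    and "c \<noteq> 0" and "Poly_Mapping.keys e \<subseteq> {2..<n}" and "e \<noteq> 0"
  shows "\<Phi> (idm(0 := Var 0 + Poly_Mapping.single e c)) = idm(0 := Var 0 + Poly_Mapping.single e c)"
  using mono_fix[OF assms(5,4,6,7)] assms(9,10) by blast

end
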